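(* Let $\xi_1,\xi_2,\dots$ be i.i.d. standard Gaussian random variables. There are constants $\tilde c_3,\tilde c_4>0$ such that for all $L>0$ and all $N\in\mathbb{N}$ with $L/2\le N\le2L$, $$\tilde c_3L\le-\log\mathbb{E}\,e^{-L\max_{i=1,\dots,N}|\xi_i|}\le\tilde c_4L.$$ *)

theory Defs
  imports "HOL-Probability.Probability"
begin

end

theory Submission
  imports Defs
begin

lemma gauss_moment:
  assumes "distributed M lborel X std_normal_density"
  shows "integrable M (\<lambda>\<omega>. X \<omega> ^ (2*k))"
    and "(\<integral>\<omega>. X \<omega> ^ (2*k) \<partial>M) = fact (2 * k) / (2^k * fact k)"
proof -
  have nn: "\<And>x. 0 \<le> std_normal_density x" by (simp add: normal_density_nonneg)
  show "integrable M (\<lambda>\<omega>. X \<omega> ^ (2*k))"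
    using distributed_integrable[OF assms, of "\<lambda>x. x^(2*k)"] nn integrable_std_normal_moment[of "2*k"]
    by simp
  show "(\<integral>\<omega>. X \<omega> ^ (2*k) \<partial>M) = fact (2 * k) / (2^k * fact k)"
    using distributed_integral[OF assms, of "\<lambda>x. x^(2*k)"] nn integral_std_normal_moment_even[of k]
    by simp
qed

lemma exp_quad: fixes y :: real assumes "y \<ge> 0" shows "exp (-y) \<le> 1 - y + y^2/2"
proof -
  define A where "A = 1 + y + y^2/2"
  define B where "B = 1 - y + y^2/2"
  have A: "A \<le> exp y" unfolding A_def using exp_lower_Taylor_quadratic assms by simp
  have A0: "A > 0" unfolding A_def using assms by (simp add: add_pos_nonneg)
  have B0: "B = (1-y)^2/2 + 1/2" unfolding B_def by (simp add: power2_eq_square field_simps)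
  hence Bp: "B > 0" by (simp add: add_nonneg_pos)
  have AB: "A * B = 1 + y^4/4" unfolding A_def B_def
    by (simp add: algebra_simps power2_eq_square power4_eq_xxxx)
  have "exp (-y) = 1 / exp y" by (simp add: exp_minus inverse_eq_divide)
  also have "\<dots> \<le> 1 / A" using A A0 by (intro divide_left_mono) auto
  also have "\<dots> \<le> B" using A0 AB by (simp add: divide_le_eq mult.commute)
  finally show ?thesis unfolding B_def .
qed

lemma poly_t: fixes t :: real assumes "t \<ge> 0" shows "t \<ge> t^2 - t^4/4"
proof -
  have "1 - t + t^3/4 \<ge> 0"
  proof (cases "t \<le> 1")
    case True
    have "t^3 \<ge> 0" using assms by simp
    then show ?thesis using True by linarith
  next
    case False
    hence "t^3 \<ge> t^2" by (simp add: power_increasing)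
    moreover have "(1 - t/2)^2 \<ge> 0" by simp
    moreover have "(1 - t/2)^2 = 1 - t + t^2/4" by (simp add: power2_eq_square algebra_simps)
    ultimately show ?thesis by linarith
  qed
  hence "t * (1 - t + t^3/4) \<ge> 0" using assms by simp
  moreover have "t * (1 - t + t^3/4) = t - t^2 + t^4/4"
    by (simp add: algebra_simps power2_eq_square power3_eq_cube power4_eq_xxxx)
  ultimately show ?thesis by linarith
qed

lemma pw_up: fixes x a :: real assumes "a \<ge> 1/4"
  shows "exp (- a * \<bar>x\<bar>) \<le> 1 - 7/32 * x^2 + x^4/16"
proof -
  have "\<bar>x\<bar>/4 \<le> a * \<bar>x\<bar>" using mult_right_mono[OF assms abs_ge_zero[of x]] by simp
  hence "exp (- a * \<bar>x\<bar>) \<le> exp (-(\<bar>x\<bar>/4))" by simp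
  also have "\<dots> \<le> 1 - \<bar>x\<bar>/4 + (\<bar>x\<bar>/4)^2/2" by (rule exp_quad) simp
  also have "\<dots> \<le> 1 - (\<bar>x\<bar>^2 - \<bar>x\<bar>^4/4)/4 + (\<bar>x\<bar>/4)^2/2"
    using poly_t[of "\<bar>x\<bar>"] by simp
  also have "\<dots> = 1 - 7/32 * x^2 + x^4/16"
    by (simp add: power_divide power2_abs power_even_abs_numeral) (simp add: field_simps)
  finally show ?thesis .
qed

lemma pow_exp_ln: fixes c :: real assumes "c > 0" shows "c ^ n = exp (real n * ln c)"
proof -
  have "exp (real n * ln c) = exp (ln c) ^ n" by (rule exp_of_nat_mult)
  thus ?thesis using assms by simp
qed

theorem lemma9:
  fixes M :: "'a measure" and \<xi> :: "nat \<Rightarrow> 'a \<Rightarrow> real"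
  assumes "prob_space M"
    and "prob_space.indep_vars M (\<lambda>_. borel) \<xi> {1..}"
    and "\<And>i. i \<ge> 1 \<Longrightarrow> distributed M lborel (\<xi> i) std_normal_density"
  shows "\<exists>c3 c4. c3 > 0 \<and> c4 > 0 \<and>
    (\<forall>L::real. \<forall>N::nat. L > 0 \<and> L / 2 \<le> real N \<and> real N \<le> 2 * L \<longrightarrow>
      c3 * L \<le> - ln (\<integral>\<omega>. exp (- L * (MAX i\<in>{1..N}. \<bar>\<xi> i \<omega>\<bar>)) \<partial>M) \<and>
      - ln (\<integral>\<omega>. exp (- L * (MAX i\<in>{1..N}. \<bar>\<xi> i \<omega>\<bar>)) \<partial>M) \<le> c4 * L)"
proof -
  interpret P: prob_space M by fact
  have rv[measurable]: "\<xi> i \<in> borel_measurable M" if "i \<ge> 1" for i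
    using distributed_measurable[OF assms(3)[OF that]] by simp
  have mom2: "integrable M (\<lambda>\<omega>. \<xi> i \<omega> ^ 2)" "(\<integral>\<omega>. \<xi> i \<omega> ^ 2 \<partial>M) = 1" if "i \<ge> 1" for i
    using gauss_moment[OF assms(3)[OF that], of 1] by (simp_all add: fact_numeral)
  have mom4: "integrable M (\<lambda>\<omega>. \<xi> i \<omega> ^ 4)" "(\<integral>\<omega>. \<xi> i \<omega> ^ 4 \<partial>M) = 3" if "i \<ge> 1" for i
    using gauss_moment[OF assms(3)[OF that], of 2] by (simp_all add: fact_numeral)
  define c3 :: real where "c3 = ln (32/31) / 2"
  define c4 :: real where "c4 = 2 - 2 * ln (3/4)"
  have "c3 > 0" unfolding c3_def by simp
  moreover have "c4 > 0"
  proof -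
    have "ln (3/4::real) < 0" by (rule ln_less_zero) auto
    thus ?thesis unfolding c4_def by linarith
  qed
  moreover have "c3 * L \<le> - ln (\<integral>\<omega>. exp (- L * (MAX i\<in>{1..N}. \<bar>\<xi> i \<omega>\<bar>)) \<partial>M) \<and>
      - ln (\<integral>\<omega>. exp (- L * (MAX i\<in>{1..N}. \<bar>\<xi> i \<omega>\<bar>)) \<partial>M) \<le> c4 * L"
    if H: "L > 0" "L / 2 \<le> real N" "real N \<le> 2 * L" for L N
  proof -
    have N1: "N \<ge> 1" using H by linarith
    have Npos: "real N > 0" using N1 by simp
    define Y where "Y \<omega> = (MAX i\<in>{1..N}. \<bar>\<xi> i \<omega>\<bar>)" for \<omega>
    have Yge: "\<bar>\<xi> i \<omega>\<bar> \<le> Y \<omega>" if "i \<in> {1..N}" for i \<omega>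
      unfolding Y_def using that by (intro Max_ge) auto
    have Ynn: "0 \<le> Y \<omega>" for \<omega> using Yge[of 1 \<omega>] N1 by auto
    have Ymeas[measurable]: "Y \<in> borel_measurable M"
      unfolding Y_def by (intro borel_measurable_Max) auto
    have indep: "P.indep_vars (\<lambda>_. borel) \<xi> {1..N}"
      by (rule P.indep_vars_subset[OF assms(2)]) auto
    have intE: "integrable M (\<lambda>\<omega>. exp (- L * Y \<omega>))"
      by (rule P.integrable_const_bound[where B=1]) (use H Ynn in \<open>auto simp: mult_nonneg_nonneg\<close>)
    define E where "E = (\<integral>\<omega>. exp (- L * Y \<omega>) \<partial>M)"
    define a where "a = L / real N"
    have a: "a \<ge> 1/4" unfolding a_def using H Npos by (simp add: field_simps)
    let ?f = "\<lambda>i \<omega>. exp (- a * \<bar>\<xi> i \<omega>\<bar>)"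
    have indf: "P.indep_vars (\<lambda>_. borel) ?f {1..N}"
      by (rule P.indep_vars_compose2[OF indep, where Y="\<lambda>i x. exp (- a * \<bar>x\<bar>)"]) measurable
    have intf: "integrable M (?f i)" if "i \<in> {1..N}" for i
      by (rule P.integrable_const_bound[where B=1]) (use that a in \<open>auto\<close>)
    have pw_u: "exp (- L * Y \<omega>) \<le> (\<Prod>i\<in>{1..N}. ?f i \<omega>)" for \<omega>
    proof -
      have "(\<Sum>i\<in>{1..N}. \<bar>\<xi> i \<omega>\<bar>) \<le> real N * Y \<omega>"
        using sum_bounded_above[of "{1..N}" "\<lambda>i. \<bar>\<xi> i \<omega>\<bar>" "Y \<omega>"] Yge by auto
      hence "a * (\<Sum>i\<in>{1..N}. \<bar>\<xi> i \<omega>\<bar>) \<le> a * (real N * Y \<omega>)"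
        using a by (intro mult_left_mono) auto
      also have "a * (real N * Y \<omega>) = L * Y \<omega>" unfolding a_def using Npos by simp
      finally have "- L * Y \<omega> \<le> - a * (\<Sum>i\<in>{1..N}. \<bar>\<xi> i \<omega>\<bar>)" by simp
      also have "\<dots> = (\<Sum>i\<in>{1..N}. - a * \<bar>\<xi> i \<omega>\<bar>)" by (simp add: sum_distrib_left)
      finally have "- L * Y \<omega> \<le> (\<Sum>i\<in>{1..N}. - a * \<bar>\<xi> i \<omega>\<bar>)" .
      thus ?thesis by (simp add: exp_sum[symmetric])
    qed
    have Ef: "(\<integral>\<omega>. ?f i \<omega> \<partial>M) \<le> 31/32" if "i \<in> {1..N}" for i
    proof -
      have i1: "i \<ge> 1" using that by simp
      have "(\<integral>\<omega>. ?f i \<omega> \<partial>M) \<le> (\<integral>\<omega>. 1 - 7/32 * \<xi> i \<omega>^2 + \<xi> i \<omega>^4/16 \<partial>M)"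
        using intf[OF that] mom2[OF i1] mom4[OF i1] pw_up[OF a]
        by (intro integral_mono) auto
      also have "\<dots> = 31/32"
        using mom2[OF i1] mom4[OF i1] by (simp add: P.prob_space)
      finally show ?thesis .
    qed
    have "E \<le> (\<integral>\<omega>. (\<Prod>i\<in>{1..N}. ?f i \<omega>) \<partial>M)"
      unfolding E_def using pw_u intE P.indep_vars_integrable[OF _ indf intf]
      by (intro integral_mono) auto
    also have "\<dots> = (\<Prod>i\<in>{1..N}. (\<integral>\<omega>. ?f i \<omega> \<partial>M))"
      by (rule P.indep_vars_lebesgue_integral[OF _ indf intf]) auto
    also have "\<dots> \<le> (\<Prod>i\<in>{1..N}. 31/32)"
      using Ef by (intro prod_mono) auto
    also have "\<dots> = (31/32) ^ N" by simp
    finally have Eup: "E \<le> (31/32) ^ N" .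
    define b where "b = exp (- 2 * L / real N)"
    have b0: "b > 0" unfolding b_def by simp
    let ?h = "\<lambda>i \<omega>. b * max 0 (1 - \<xi> i \<omega>^2/4)"
    have indh: "P.indep_vars (\<lambda>_. borel) ?h {1..N}"
      by (rule P.indep_vars_compose2[OF indep, where Y="\<lambda>i x. b * max 0 (1 - x^2/4)"]) measurable
    have inth: "integrable M (?h i)" if "i \<in> {1..N}" for i
    proof (rule P.integrable_const_bound[where B=b])
      show "AE x in M. norm (?h i x) \<le> b" using b0
        by (auto simp: abs_mult intro!: mult_left_le)
    next
      have [measurable]: "\<xi> i \<in> borel_measurable M" using rv that by auto
      show "?h i \<in> borel_measurable M" by measurable
    qed
    have pw_l: "(\<Prod>i\<in>{1..N}. ?h i \<omega>) \<le> exp (- L * Y \<omega>)" for \<omega>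
    proof (cases "\<forall>i\<in>{1..N}. \<bar>\<xi> i \<omega>\<bar> \<le> 2")
      case True
      have "Y \<omega> \<le> 2" unfolding Y_def using True N1 by (subst Max_le_iff) auto
      have "(\<Prod>i\<in>{1..N}. ?h i \<omega>) \<le> (\<Prod>i\<in>{1..N}. b)"
        using b0 by (intro prod_mono) (auto intro!: mult_left_le)
      also have "\<dots> = b ^ N" by simp
      also have "\<dots> = exp (- 2 * L)" unfolding b_def using Npos
        by (simp add: exp_of_nat_mult[symmetric])
      also have "\<dots> \<le> exp (- L * Y \<omega>)" using \<open>Y \<omega> \<le> 2\<close> H by simp
      finally show ?thesis .
    next
      case False
      then obtain j where j: "j \<in> {1..N}" "\<bar>\<xi> j \<omega>\<bar> > 2" by auto
      have "2^2 < \<bar>\<xi> j \<omega>\<bar>^2" using j(2) by (intro power_strict_mono) auto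
      hence "\<xi> j \<omega>^2 > 2^2" by simp
      hence "?h j \<omega> = 0" by simp
      hence "(\<Prod>i\<in>{1..N}. ?h i \<omega>) = 0" using j(1) by (intro prod_zero) auto
      moreover have "0 \<le> exp (- L * Y \<omega>)" by simp
      ultimately show ?thesis by linarith
    qed
    have Eh: "(\<integral>\<omega>. ?h i \<omega> \<partial>M) \<ge> b * (3/4)" if "i \<in> {1..N}" for i
    proof -
      have i1: "i \<ge> 1" using that by simp
      have "b * (3/4) = (\<integral>\<omega>. b * (1 - \<xi> i \<omega>^2/4) \<partial>M)"
        using mom2[OF i1] by (simp add: P.prob_space algebra_simps)
      also have "\<dots> \<le> (\<integral>\<omega>. ?h i \<omega> \<partial>M)"
        using inth[OF that] mom2[OF i1] b0
        by (intro integral_mono) (auto intro!: mult_left_mono integrable_mult_right integrable_diff simp: integrable_divide_zero)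
      finally show ?thesis .
    qed
    have "(b * (3/4)) ^ N = (\<Prod>i\<in>{1..N}. b * (3/4))" by simp
    also have "\<dots> \<le> (\<Prod>i\<in>{1..N}. (\<integral>\<omega>. ?h i \<omega> \<partial>M))"
      using Eh b0 by (intro prod_mono) auto
    also have "\<dots> = (\<integral>\<omega>. (\<Prod>i\<in>{1..N}. ?h i \<omega>) \<partial>M)"
      by (rule P.indep_vars_lebesgue_integral[OF _ indh inth, symmetric]) auto
    also have "\<dots> \<le> E"
      unfolding E_def using pw_l intE P.indep_vars_integrable[OF _ indh inth]
      by (intro integral_mono) auto
    finally have Elow: "(b * (3/4)) ^ N \<le> E" .
    have "(b * (3/4)) ^ N = exp (- 2 * L + real N * ln (3/4))"
    proof -
      have 1: "b ^ N = exp (- 2 * L)" unfolding b_def using Npos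
        by (simp add: exp_of_nat_mult[symmetric])
      have 2: "(3/4::real) ^ N = exp (real N * ln (3/4))"
        by (rule pow_exp_ln) simp
      have "(b * (3/4)) ^ N = b ^ N * (3/4::real) ^ N" by (rule power_mult_distrib)
      also have "\<dots> = exp (- 2 * L) * exp (real N * ln (3/4))" by (simp only: 1 2)
      also have "\<dots> = exp (- 2 * L + real N * ln (3/4))" by (rule exp_add[symmetric])
      finally show ?thesis .
    qed
    also have "\<dots> \<ge> exp (- c4 * L)"
    proof -
      have "real N * ln (3/4) \<ge> 2 * L * ln (3/4)"
        using H by (intro mult_right_mono_neg) auto
      thus ?thesis unfolding c4_def by (simp add: algebra_simps)
    qed
    finally have Elow': "exp (- c4 * L) \<le> E" using Elow by linarith
    have "(31/32::real) ^ N = exp (real N * ln (31/32))"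
      by (rule pow_exp_ln) simp
    also have "\<dots> \<le> exp (- c3 * L)"
    proof -
      have "real N * ln (31/32) \<le> (L/2) * ln (31/32)"
        using H by (intro mult_right_mono_neg) auto
      moreover have "ln (31/32::real) = - ln (32/31)" by (simp add: ln_div)
      ultimately show ?thesis unfolding c3_def by (simp add: algebra_simps)
    qed
    finally have Eup': "E \<le> exp (- c3 * L)" using Eup by linarith
    have Epos: "E > 0" using Elow' exp_gt_zero[of "- c4 * L"] by linarith
    have "ln E \<le> - c3 * L" using Eup' Epos by (metis ln_exp ln_le_cancel_iff exp_gt_zero)
    moreover have "- c4 * L \<le> ln E" using Elow' Epos by (metis ln_exp ln_le_cancel_iff exp_gt_zero)
    ultimately show ?thesis unfolding E_def Y_def by simp
  qed
  ultimately show ?thesis by blast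
qed

end
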